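(* Let $\Gamma=((V,E),m)$ be an EAFC system with $V$ finite, $G=G_\Gamma$, and $Y\subseteq G$. Then $N_G(Y):=\{g\in G \mid gYg^{-1}=Y\}$ is contained in $N_G(P(Y))$.
   Context: An Artin–Tits system $\Gamma=((V,E),m)$ consists of a simplicial graph $(V,E)$ and a labelling $m\colon E\to\{2,3,\dots\}$; $G_\Gamma=\langle V \mid \mathrm{prod}(u,v,m(\{u,v\}))=\mathrm{prod}(v,u,m(\{u,v\}))\ \forall \{u,v\}\in E\rangle$, where $\mathrm{prod}(u,v,n)$ is the prefix of length $n$ of $uvuv\cdots$. An EAFC system has all labels even and among any three pairwise adjacent vertices at least two of the three edges have label $2$. For $S\subseteq V$, $G_S=\langle S\rangle$; a parabolic subgroup is a subgroup $gG_Sg^{-1}$ with $g\in G_\Gamma$, $S\subseteq V$. $P(Y)$ is the intersection of all parabolic subgroups of $G_\Gamma$ containing $Y$. *)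

theory Defs
  imports "HOL-Algebra.Algebra"
begin

definition artin_system :: "'v set \<Rightarrow> 'v set set \<Rightarrow> ('v set \<Rightarrow> nat) \<Rightarrow> bool" where
  "artin_system V E m \<longleftrightarrow>
     (\<forall>e\<in>E. e \<subseteq> V \<and> card e = 2) \<and> (\<forall>e\<in>E. m e \<ge> 2)"

definition EAFC :: "'v set \<Rightarrow> 'v set set \<Rightarrow> ('v set \<Rightarrow> nat) \<Rightarrow> bool" where
  "EAFC V E m \<longleftrightarrow> artin_system V E m \<and>
     (\<forall>e\<in>E. even (m e)) \<and>
     (\<forall>a b c. {a,b} \<in> E \<and> {b,c} \<in> E \<and> {a,c} \<in> E \<longrightarrow>
        2 \<le> card {e \<in> {{a,b},{b,c},{a,c}}. m e = 2})"

text \<open>Words: letters (v, False) = v, (v, True) = v^{-1}.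
  prod u v n = prefix of length n of u v u v ...\<close>

definition alt_prod :: "'v \<Rightarrow> 'v \<Rightarrow> nat \<Rightarrow> ('v \<times> bool) list" where
  "alt_prod u v n = map (\<lambda>i. if even i then (u, False) else (v, False)) [0..<n]"

inductive_set artin_rel :: "'v set \<Rightarrow> 'v set set \<Rightarrow> ('v set \<Rightarrow> nat)
    \<Rightarrow> (('v \<times> bool) list \<times> ('v \<times> bool) list) set"
  for V E m where
  refl: "(w, w) \<in> artin_rel V E m"
| sym: "(w, w') \<in> artin_rel V E m \<Longrightarrow> (w', w) \<in> artin_rel V E m"
| trans: "(w, w') \<in> artin_rel V E m \<Longrightarrow> (w', w'') \<in> artin_rel V E m \<Longrightarrow> (w, w'') \<in> artin_rel V E m"
| cancel: "v \<in> V \<Longrightarrow> ([(v, b), (v, \<not> b)], []) \<in> artin_rel V E m"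
| braid: "{u, v} \<in> E \<Longrightarrow> (alt_prod u v (m {u, v}), alt_prod v u (m {u, v})) \<in> artin_rel V E m"
| cong: "(w, w') \<in> artin_rel V E m \<Longrightarrow> (a @ w @ b, a @ w' @ b) \<in> artin_rel V E m"

definition artin_class :: "'v set \<Rightarrow> 'v set set \<Rightarrow> ('v set \<Rightarrow> nat)
    \<Rightarrow> ('v \<times> bool) list \<Rightarrow> ('v \<times> bool) list set" where
  "artin_class V E m w = {w'. (w, w') \<in> artin_rel V E m}"

definition artin_group :: "'v set \<Rightarrow> 'v set set \<Rightarrow> ('v set \<Rightarrow> nat)
    \<Rightarrow> ('v \<times> bool) list set monoid" where
  "artin_group V E m =
     \<lparr> carrier = artin_class V E m ` lists (V \<times> UNIV),
       monoid.mult = (\<lambda>A B. artin_class V E m ((SOME a. a \<in> A) @ (SOME b. b \<in> B))),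
       monoid.one = artin_class V E m [] \<rparr>"

definition artin_gen :: "'v set \<Rightarrow> 'v set set \<Rightarrow> ('v set \<Rightarrow> nat)
    \<Rightarrow> 'v \<Rightarrow> ('v \<times> bool) list set" where
  "artin_gen V E m v = artin_class V E m [(v, False)]"

definition conj_set :: "('a, 'b) monoid_scheme \<Rightarrow> 'a \<Rightarrow> 'a set \<Rightarrow> 'a set" where
  "conj_set G g Y = (\<lambda>y. g \<otimes>\<^bsub>G\<^esub> y \<otimes>\<^bsub>G\<^esub> inv\<^bsub>G\<^esub> g) ` Y"

definition normalizer_set :: "('a, 'b) monoid_scheme \<Rightarrow> 'a set \<Rightarrow> 'a set" where
  "normalizer_set G Y = {g \<in> carrier G. conj_set G g Y = Y}"

definition std_parabolic :: "'v set \<Rightarrow> 'v set set \<Rightarrow> ('v set \<Rightarrow> nat)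
    \<Rightarrow> 'v set \<Rightarrow> ('v \<times> bool) list set set" where
  "std_parabolic V E m S = generate (artin_group V E m) (artin_gen V E m ` S)"

definition parabolic :: "'v set \<Rightarrow> 'v set set \<Rightarrow> ('v set \<Rightarrow> nat)
    \<Rightarrow> ('v \<times> bool) list set set \<Rightarrow> bool" where
  "parabolic V E m H \<longleftrightarrow> (\<exists>g \<in> carrier (artin_group V E m). \<exists>S \<subseteq> V.
      H = conj_set (artin_group V E m) g (std_parabolic V E m S))"

definition parabolic_closure :: "'v set \<Rightarrow> 'v set set \<Rightarrow> ('v set \<Rightarrow> nat)
    \<Rightarrow> ('v \<times> bool) list set set \<Rightarrow> ('v \<times> bool) list set set" where
  "parabolic_closure V E m Y = \<Inter> {H. parabolic V E m H \<and> Y \<subseteq> H}"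

end

theory Submission
  imports Defs
begin

lemma ar_cong2:
  assumes "(a, a') \<in> artin_rel V E m" "(b, b') \<in> artin_rel V E m"
  shows "(a @ b, a' @ b') \<in> artin_rel V E m"
proof -
  have "([] @ a @ b, [] @ a' @ b) \<in> artin_rel V E m" by (rule artin_rel.cong[OF assms(1)])
  moreover have "(a' @ b @ [], a' @ b' @ []) \<in> artin_rel V E m" by (rule artin_rel.cong[OF assms(2)])
  ultimately show ?thesis using artin_rel.trans by fastforce
qed

lemma cls_eq: "(w, w') \<in> artin_rel V E m \<Longrightarrow> artin_class V E m w = artin_class V E m w'"
  unfolding artin_class_def by (auto intro: artin_rel.trans artin_rel.sym)

lemma cls_mem: "w \<in> artin_class V E m w"
  unfolding artin_class_def by (auto intro: artin_rel.refl)

lemma cls_mult: "artin_class V E m a \<otimes>\<^bsub>artin_group V E m\<^esub> artin_class V E m b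
   = artin_class V E m (a @ b)"
proof -
  let ?A = "artin_class V E m a" and ?B = "artin_class V E m b"
  have "(SOME x. x \<in> ?A) \<in> ?A" by (rule someI, rule cls_mem)
  hence 1: "(a, SOME x. x \<in> ?A) \<in> artin_rel V E m" by (simp add: artin_class_def)
  have "(SOME x. x \<in> ?B) \<in> ?B" by (rule someI, rule cls_mem)
  hence 2: "(b, SOME x. x \<in> ?B) \<in> artin_rel V E m" by (simp add: artin_class_def)
  show ?thesis unfolding artin_group_def
    using cls_eq[OF ar_cong2[OF 1 2]] by simp
qed

definition winv :: "('v \<times> bool) list \<Rightarrow> ('v \<times> bool) list" where
  "winv w = rev (map (\<lambda>(v,b). (v, \<not> b)) w)"

lemma winv_lists: "w \<in> lists (V \<times> UNIV) \<Longrightarrow> winv w \<in> lists (V \<times> UNIV)"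
  unfolding winv_def by auto

lemma winv_cancel: "w \<in> lists (V \<times> UNIV) \<Longrightarrow> (winv w @ w, []) \<in> artin_rel V E m"
proof (induction w)
  case Nil
  then show ?case by (simp add: winv_def artin_rel.refl)
next
  case (Cons x w)
  obtain v b where x: "x = (v, b)" by (cases x)
  have v: "v \<in> V" using Cons.prems x by auto
  have "(winv w @ [(v, \<not> b), (v, \<not> \<not> b)] @ w, winv w @ [] @ w) \<in> artin_rel V E m"
    by (rule artin_rel.cong[OF artin_rel.cancel[OF v]])
  moreover have "winv (x # w) @ x # w = winv w @ [(v, \<not> b), (v, \<not> \<not> b)] @ w"
    by (simp add: winv_def x)
  ultimately show ?case using Cons artin_rel.trans by fastforce
qed

lemma artin_is_group: "group (artin_group V E m)"
proof (rule groupI)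
  let ?G = "artin_group V E m"
  show "\<And>x y. x \<in> carrier ?G \<Longrightarrow> y \<in> carrier ?G \<Longrightarrow> x \<otimes>\<^bsub>?G\<^esub> y \<in> carrier ?G"
  proof -
    fix x y assume "x \<in> carrier ?G" "y \<in> carrier ?G"
    then obtain a b where "a \<in> lists (V \<times> UNIV)" "b \<in> lists (V \<times> UNIV)"
      "x = artin_class V E m a" "y = artin_class V E m b"
      by (auto simp: artin_group_def)
    thus "x \<otimes>\<^bsub>?G\<^esub> y \<in> carrier ?G"
      by (simp add: cls_mult) (simp add: artin_group_def)
  qed
  show "\<one>\<^bsub>?G\<^esub> \<in> carrier ?G" by (force simp: artin_group_def)
  show "\<And>x y z. x \<in> carrier ?G \<Longrightarrow> y \<in> carrier ?G \<Longrightarrow> z \<in> carrier ?G \<Longrightarrow>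
      x \<otimes>\<^bsub>?G\<^esub> y \<otimes>\<^bsub>?G\<^esub> z = x \<otimes>\<^bsub>?G\<^esub> (y \<otimes>\<^bsub>?G\<^esub> z)"
  proof -
    fix x y z assume "x \<in> carrier ?G" "y \<in> carrier ?G" "z \<in> carrier ?G"
    then obtain a b c where "x = artin_class V E m a" "y = artin_class V E m b"
      "z = artin_class V E m c"
      by (auto simp: artin_group_def)
    thus "x \<otimes>\<^bsub>?G\<^esub> y \<otimes>\<^bsub>?G\<^esub> z = x \<otimes>\<^bsub>?G\<^esub> (y \<otimes>\<^bsub>?G\<^esub> z)"
      by (simp add: cls_mult)
  qed
  show "\<And>x. x \<in> carrier ?G \<Longrightarrow> \<one>\<^bsub>?G\<^esub> \<otimes>\<^bsub>?G\<^esub> x = x"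
  proof -
    fix x assume "x \<in> carrier ?G"
    then obtain a where "x = artin_class V E m a" by (auto simp: artin_group_def)
    moreover have "\<one>\<^bsub>?G\<^esub> = artin_class V E m []" by (simp add: artin_group_def)
    ultimately show "\<one>\<^bsub>?G\<^esub> \<otimes>\<^bsub>?G\<^esub> x = x" by (simp add: cls_mult)
  qed
  show "\<And>x. x \<in> carrier ?G \<Longrightarrow> \<exists>y\<in>carrier ?G. y \<otimes>\<^bsub>?G\<^esub> x = \<one>\<^bsub>?G\<^esub>"
  proof -
    fix x assume "x \<in> carrier ?G"
    then obtain a where a: "a \<in> lists (V \<times> UNIV)" "x = artin_class V E m a"
      by (auto simp: artin_group_def)
    have "artin_class V E m (winv a) \<in> carrier ?G"
      using winv_lists[OF a(1)] by (simp add: artin_group_def)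
    moreover have "artin_class V E m (winv a) \<otimes>\<^bsub>?G\<^esub> x = \<one>\<^bsub>?G\<^esub>"
    proof -
      have "artin_class V E m (winv a) \<otimes>\<^bsub>?G\<^esub> x = artin_class V E m []"
        using a cls_eq[OF winv_cancel[OF a(1)]] by (simp add: cls_mult)
      thus ?thesis by (simp add: artin_group_def)
    qed
    ultimately show "\<exists>y\<in>carrier ?G. y \<otimes>\<^bsub>?G\<^esub> x = \<one>\<^bsub>?G\<^esub>" by blast
  qed
qed

lemma (in group) conj_conj:
  assumes "A \<subseteq> carrier G" "g \<in> carrier G" "h \<in> carrier G"
  shows "conj_set G g (conj_set G h A) = conj_set G (g \<otimes> h) A"
  unfolding conj_set_def image_image
proof (rule image_cong[OF HOL.refl])
  fix y assume "y \<in> A"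
  hence y: "y \<in> carrier G" using assms by auto
  show "g \<otimes> (h \<otimes> y \<otimes> inv h) \<otimes> inv g = g \<otimes> h \<otimes> y \<otimes> inv (g \<otimes> h)"
    using assms y by (simp add: inv_mult_group m_assoc)
qed

lemma (in group) conj_one:
  assumes "A \<subseteq> carrier G" shows "conj_set G \<one> A = A"
proof -
  have "\<And>y. y \<in> A \<Longrightarrow> \<one> \<otimes> y \<otimes> inv \<one> = y" using assms by auto
  thus ?thesis unfolding conj_set_def by simp
qed

lemma (in group) conj_sub:
  assumes "A \<subseteq> carrier G" "g \<in> carrier G" shows "conj_set G g A \<subseteq> carrier G"
  unfolding conj_set_def using assms by auto

lemma (in group) conj_inv_cancel:
  assumes "A \<subseteq> carrier G" "g \<in> carrier G"
  shows "conj_set G (inv g) (conj_set G g A) = A"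
  using assms by (simp add: conj_conj conj_one)

lemma (in group) conj_inv_cancel2:
  assumes "A \<subseteq> carrier G" "g \<in> carrier G"
  shows "conj_set G g (conj_set G (inv g) A) = A"
  using assms by (simp add: conj_conj conj_one)

lemma gen_inv:
  assumes "v \<in> V"
  shows "inv\<^bsub>artin_group V E m\<^esub> (artin_gen V E m v) = artin_class V E m [(v, True)]"
proof -
  interpret group "artin_group V E m" by (rule artin_is_group)
  have c1: "artin_gen V E m v \<in> carrier (artin_group V E m)"
    using assms by (force simp: artin_gen_def artin_group_def)
  have c2: "artin_class V E m [(v, True)] \<in> carrier (artin_group V E m)"
    using assms by (force simp: artin_group_def)
  have "artin_class V E m [(v, True)] \<otimes>\<^bsub>artin_group V E m\<^esub> artin_gen V E m v
     = artin_class V E m []"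
    using cls_eq[OF winv_cancel[of "[(v,False)]" V E m]] assms
    by (simp add: artin_gen_def cls_mult winv_def)
  hence "artin_class V E m [(v, True)] \<otimes>\<^bsub>artin_group V E m\<^esub> artin_gen V E m v
     = \<one>\<^bsub>artin_group V E m\<^esub>" by (simp add: artin_group_def)
  thus ?thesis using inv_equality c1 c2 by blast
qed

lemma std_full: "std_parabolic V E m V = carrier (artin_group V E m)"
proof -
  let ?G = "artin_group V E m"
  interpret group ?G by (rule artin_is_group)
  have gs: "artin_gen V E m ` V \<subseteq> carrier ?G"
    by (force simp: artin_gen_def artin_group_def)
  have "w \<in> lists (V \<times> UNIV) \<Longrightarrow> artin_class V E m w \<in> generate ?G (artin_gen V E m ` V)" for w
  proof (induction w)
    case Nil
    then show ?case using generate.one[of ?G] by (simp add: artin_group_def)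
  next
    case (Cons x w)
    obtain v b where x: "x = (v, b)" by (cases x)
    have v: "v \<in> V" using Cons.prems x by auto
    have "artin_class V E m [x] \<in> generate ?G (artin_gen V E m ` V)"
    proof (cases b)
      case True
      then show ?thesis using generate.inv[of "artin_gen V E m v" "artin_gen V E m ` V" ?G] v
        gen_inv[OF v, of E m] x by simp
    next
      case False
      then show ?thesis using generate.incl[of "artin_gen V E m v" "artin_gen V E m ` V" ?G] v x
        by (simp add: artin_gen_def)
    qed
    from generate.eng[OF this Cons.IH] Cons.prems show ?case by (simp add: cls_mult)
  qed
  hence "carrier ?G \<subseteq> generate ?G (artin_gen V E m ` V)"
    by (auto simp: artin_group_def)
  moreover have "generate ?G (artin_gen V E m ` V) \<subseteq> carrier ?G"
    using generate_in_carrier[OF gs] by blast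
  ultimately show ?thesis unfolding std_parabolic_def by blast
qed

lemma parabolic_sub:
  assumes "parabolic V E m H" shows "H \<subseteq> carrier (artin_group V E m)"
proof -
  let ?G = "artin_group V E m"
  interpret group ?G by (rule artin_is_group)
  obtain g S where g: "g \<in> carrier ?G" "S \<subseteq> V" and H: "H = conj_set ?G g (std_parabolic V E m S)"
    using assms unfolding parabolic_def by blast
  have gs: "artin_gen V E m ` S \<subseteq> carrier ?G"
    using g(2) by (force simp: artin_gen_def artin_group_def)
  have "std_parabolic V E m S \<subseteq> carrier ?G"
    unfolding std_parabolic_def using generate_in_carrier[OF gs] by blast
  thus ?thesis using H conj_sub g by blast
qed

lemma parabolic_conj:
  assumes "parabolic V E m H" "g \<in> carrier (artin_group V E m)"
  shows "parabolic V E m (conj_set (artin_group V E m) g H)"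
proof -
  let ?G = "artin_group V E m"
  interpret group ?G by (rule artin_is_group)
  obtain h S where h: "h \<in> carrier ?G" "S \<subseteq> V" and H: "H = conj_set ?G h (std_parabolic V E m S)"
    using assms unfolding parabolic_def by blast
  have gs: "artin_gen V E m ` S \<subseteq> carrier ?G"
    using h(2) by (force simp: artin_gen_def artin_group_def)
  have "std_parabolic V E m S \<subseteq> carrier ?G"
    unfolding std_parabolic_def using generate_in_carrier[OF gs] by blast
  hence "conj_set ?G g H = conj_set ?G (g \<otimes>\<^bsub>?G\<^esub> h) (std_parabolic V E m S)"
    using H h assms(2) conj_conj by simp
  thus ?thesis unfolding parabolic_def using h assms(2) by blast
qed

theorem lemma2p4:
  fixes V :: "'v set" and E :: "'v set set" and m :: "'v set \<Rightarrow> nat"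
    and Y :: "('v \<times> bool) list set set"
  assumes "EAFC V E m"
    and "finite V"
    and "Y \<subseteq> carrier (artin_group V E m)"
  shows "normalizer_set (artin_group V E m) Y
           \<subseteq> normalizer_set (artin_group V E m) (parabolic_closure V E m Y)"
proof
  let ?G = "artin_group V E m"
  interpret group ?G by (rule artin_is_group)
  let ?P = "parabolic_closure V E m Y"
  fix g assume gN: "g \<in> normalizer_set ?G Y"
  have g: "g \<in> carrier ?G" using gN by (simp add: normalizer_set_def)
  have gY: "conj_set ?G g Y = Y" using gN by (simp add: normalizer_set_def)
  have giY: "conj_set ?G (inv\<^bsub>?G\<^esub> g) Y = Y"
    using conj_inv_cancel[OF assms(3) g] gY by simp
  have ggY: "conj_set ?G (inv\<^bsub>?G\<^esub> (inv\<^bsub>?G\<^esub> g)) Y = Y"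
    using gY g by simp
  have fullpar: "parabolic V E m (carrier ?G)"
    unfolding parabolic_def
  proof (intro bexI exI conjI)
    show "carrier ?G = conj_set ?G \<one>\<^bsub>?G\<^esub> (std_parabolic V E m V)"
      using std_full[of V E m] conj_one[of "carrier ?G"] by simp
  qed auto
  have Psub: "?P \<subseteq> carrier ?G"
    unfolding parabolic_closure_def using fullpar assms(3) by blast
  have key: "conj_set ?G k ?P \<subseteq> ?P" if k: "k \<in> carrier ?G" and kY: "conj_set ?G (inv\<^bsub>?G\<^esub> k) Y = Y" for k
  proof
    fix x assume "x \<in> conj_set ?G k ?P"
    then obtain z where z: "z \<in> ?P" and x: "x = k \<otimes>\<^bsub>?G\<^esub> z \<otimes>\<^bsub>?G\<^esub> inv\<^bsub>?G\<^esub> k"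
      unfolding conj_set_def by blast
    show "x \<in> ?P" unfolding parabolic_closure_def
    proof
      fix H assume "H \<in> {H. parabolic V E m H \<and> Y \<subseteq> H}"
      hence H: "parabolic V E m H" "Y \<subseteq> H" by auto
      have Hc: "H \<subseteq> carrier ?G" by (rule parabolic_sub[OF H(1)])
      let ?H' = "conj_set ?G (inv\<^bsub>?G\<^esub> k) H"
      have "parabolic V E m ?H'" using parabolic_conj[OF H(1)] k by simp
      moreover have "Y \<subseteq> ?H'"
      proof -
        have "conj_set ?G (inv\<^bsub>?G\<^esub> k) Y \<subseteq> ?H'"
          unfolding conj_set_def using H(2) by (rule image_mono)
        thus ?thesis using kY by simp
      qed
      ultimately have z': "z \<in> ?H'" using z unfolding parabolic_closure_def by blast
      have "x \<in> conj_set ?G k ?H'"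
        unfolding conj_set_def[of ?G k ?H']
        by (rule image_eqI[where x=z and f="\<lambda>y. k \<otimes>\<^bsub>?G\<^esub> y \<otimes>\<^bsub>?G\<^esub> inv\<^bsub>?G\<^esub> k", OF _ z']) (simp add: x)
      thus "x \<in> H" using conj_inv_cancel2[OF Hc k] by simp
    qed
  qed
  have 1: "conj_set ?G g ?P \<subseteq> ?P" using key[OF g giY] .
  have "conj_set ?G (inv\<^bsub>?G\<^esub> g) ?P \<subseteq> ?P" by (rule key[OF inv_closed[OF g] ggY])
  hence "conj_set ?G g (conj_set ?G (inv\<^bsub>?G\<^esub> g) ?P) \<subseteq> conj_set ?G g ?P"
    unfolding conj_set_def by (rule image_mono)
  hence 2: "?P \<subseteq> conj_set ?G g ?P"
    using conj_inv_cancel2[OF Psub g] by simp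
  have "conj_set ?G g ?P = ?P" using 1 2 by (rule antisym)
  thus "g \<in> normalizer_set ?G ?P" using g by (simp add: normalizer_set_def)
qed

end
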